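(* Let $X$ be a stacked simplicial complex of dimension $d$, let $h,k$ be faces of $X$ such that $h\cup k$ is not contained in any codimension one face, and let $h\,|\,f_1,\dots,f_p\,|\,k$ be a path between $h$ and $k$. Then for every $1\le i<p$ we have $h\not\subseteq f_i\cap f_{i+1}$ and $k\not\subseteq f_i\cap f_{i+1}$.
   Context: A simplicial complex $X$ on a finite vertex set $V$ is a family of subsets (faces) of $V$ closed under taking subsets, every element of $V$ lying in some face; facets are inclusion-maximal faces. $X$ is pure of dimension $d$ if every facet has $d+1$ elements; a codimension one face is a face with $d$ elements. $X$ is stacked if it is pure of some dimension $d$ and its facets can be ordered $F_0,F_1,\dots,F_k$ (a stacking order) such that for each $p\ge 1$, $F_p$ contains exactly one vertex $v_p$ not in $F_0\cup\dots\cup F_{p-1}$ (called the free vertex of $F_p$), and $F_p\setminus\{v_p\}\subseteq F_j$ for some $j<p$. A walk is a sequence of facets $f_1,\dots,f_p$ ($p\ge 1$) such that each $f_i\cap f_{i+1}$ has exactly $d$ elements; a path is a walk in which the faces $f_i\cap f_{i+1}$, $1\le i<p$, are pairwise distinct. For faces $h,k$ such that $h\cup k$ is not contained in any codimension one face, a path between $h$ and $k$, written $h\,|\,f_1,\dots,f_p\,|\,k$, is a path $f_1,\dots,f_p$ with $h\subseteq f_1$, $k\subseteq f_p$, and, if $p\ge 2$, $h\not\subseteq f_1\cap f_2$ and $k\not\subseteq f_p\cap f_{p-1}$. For a vertex $v$ one writes $v$ for $\{v\}$. *)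

theory Defs
  imports Main
begin

definition simplicial_complex :: "'a set \<Rightarrow> 'a set set \<Rightarrow> bool" where
  "simplicial_complex V X \<longleftrightarrow> finite V \<and> (\<forall>F\<in>X. F \<subseteq> V)
     \<and> (\<forall>F\<in>X. \<forall>G. G \<subseteq> F \<longrightarrow> G \<in> X) \<and> (\<forall>v\<in>V. \<exists>F\<in>X. v \<in> F)"

definition facets :: "'a set set \<Rightarrow> 'a set set" where
  "facets X = {F \<in> X. \<forall>G\<in>X. F \<subseteq> G \<longrightarrow> G = F}"

definition pure_dim :: "'a set set \<Rightarrow> nat \<Rightarrow> bool" where
  "pure_dim X d \<longleftrightarrow> (\<forall>F\<in>facets X. card F = d + 1)"

definition codim_one :: "'a set set \<Rightarrow> nat \<Rightarrow> 'a set \<Rightarrow> bool" where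
  "codim_one X d c \<longleftrightarrow> c \<in> X \<and> card c = d"

definition stacking_order :: "'a set set \<Rightarrow> 'a set list \<Rightarrow> bool" where
  "stacking_order X Fs \<longleftrightarrow> Fs \<noteq> [] \<and> distinct Fs \<and> set Fs = facets X \<and>
     (\<forall>p. 1 \<le> p \<and> p < length Fs \<longrightarrow>
        (\<exists>v. Fs ! p - \<Union>(set (take p Fs)) = {v} \<and>
             (\<exists>j<p. Fs ! p - {v} \<subseteq> Fs ! j)))"

definition stacked_dim :: "'a set set \<Rightarrow> nat \<Rightarrow> bool" where
  "stacked_dim X d \<longleftrightarrow> pure_dim X d \<and> (\<exists>Fs. stacking_order X Fs)"

text \<open>Walks (as lists f_1..f_p, 0-indexed) in a complex of dimension d.\<close>
definition walk :: "'a set set \<Rightarrow> nat \<Rightarrow> 'a set list \<Rightarrow> bool" where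
  "walk X d fs \<longleftrightarrow> fs \<noteq> [] \<and> set fs \<subseteq> facets X \<and>
     (\<forall>i. i + 1 < length fs \<longrightarrow> card (fs ! i \<inter> fs ! (i + 1)) = d)"

definition path :: "'a set set \<Rightarrow> nat \<Rightarrow> 'a set list \<Rightarrow> bool" where
  "path X d fs \<longleftrightarrow> walk X d fs \<and>
     distinct (map (\<lambda>i. fs ! i \<inter> fs ! (i + 1)) [0..<length fs - 1])"

definition path_between :: "'a set set \<Rightarrow> nat \<Rightarrow> 'a set \<Rightarrow> 'a set list \<Rightarrow> 'a set \<Rightarrow> bool" where
  "path_between X d h fs k \<longleftrightarrow> path X d fs \<and> h \<subseteq> hd fs \<and> k \<subseteq> last fs \<and>
     (2 \<le> length fs \<longrightarrow>
        \<not> h \<subseteq> fs ! 0 \<inter> fs ! 1 \<and>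
        \<not> k \<subseteq> fs ! (length fs - 1) \<inter> fs ! (length fs - 2))"

end

theory Submission
  imports Defs
begin

lemma key:
  fixes Fs :: "'a set list"
  shows "\<And>fs m. (\<forall>p. 1 \<le> p \<and> p < length Fs \<longrightarrow> (\<exists>v. Fs!p - \<Union>(set (take p Fs)) = {v})) \<Longrightarrow>
    (\<forall>F\<in>set Fs. card F = Suc d) \<Longrightarrow>
    set fs \<subseteq> set Fs \<Longrightarrow>
    (\<forall>i. Suc i < length fs \<longrightarrow> card (fs!i \<inter> fs!Suc i) = d) \<Longrightarrow>
    (\<forall>i j. i < j \<longrightarrow> Suc j < length fs \<longrightarrow> fs!i \<inter> fs!Suc i \<noteq> fs!j \<inter> fs!Suc j) \<Longrightarrow>
    1 \<le> m \<Longrightarrow> m < length fs \<Longrightarrow> h \<subseteq> fs!0 \<Longrightarrow> h \<subseteq> fs!m \<Longrightarrow> h \<subseteq> fs!0 \<inter> fs!1"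
proof (induction Fs rule: rev_induct)
  case Nil
  then show ?case by (cases fs) auto
next
  case (snoc F xs fs m)
  note stk = snoc.prems(1) and cards = snoc.prems(2) and sub = snoc.prems(3)
    and P2 = snoc.prems(4) and P3 = snoc.prems(5)
  define n where "n = length fs"
  have mn: "1 \<le> m" "m < n" using snoc.prems n_def by auto
  have neq: "fs!i \<noteq> fs!Suc i" if "Suc i < n" for i
  proof
    assume e: "fs!i = fs!Suc i"
    have "fs!i \<in> set (xs@[F])" using sub that n_def by (simp add: subset_iff)
    hence "card (fs!i) = Suc d" using cards by blast
    thus False using P2 e that n_def by auto
  qed
  have stk': "\<forall>p. 1 \<le> p \<and> p < length xs \<longrightarrow> (\<exists>v. xs!p - \<Union>(set (take p xs)) = {v})"
  proof (intro allI impI)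
    fix p assume "1 \<le> p \<and> p < length xs"
    with stk[rule_format, of p] show "\<exists>v. xs!p - \<Union>(set (take p xs)) = {v}"
      by (simp add: nth_append)
  qed
  have cards': "\<forall>F\<in>set xs. card F = Suc d" using cards by simp
  show ?case
  proof (cases "xs = []")
    case True
    hence "\<forall>f\<in>set fs. f = F" using sub by auto
    moreover have "Suc 0 < n" using mn by simp
    ultimately have "fs!0 = fs!Suc 0" using n_def by (metis Suc_lessD nth_mem)
    thus ?thesis using neq[of 0] \<open>Suc 0 < n\<close> by simp
  next
    case False
    then obtain v where v: "F - \<Union>(set xs) = {v}"
      using stk[rule_format, of "length xs"] by (cases xs) auto
    have vF: "v \<in> F" using v by auto
    have vxs: "\<forall>g\<in>set xs. v \<notin> g" using v by auto
    have finF: "finite F" using cards card.infinite by fastforce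
    have cardR: "card (F - {v}) = d" using cards vF finF by simp
    have inxs: "fs!i \<in> set xs" if "i < n" "fs!i \<noteq> F" for i
      using sub that n_def nth_mem[of i fs] by (auto simp del: nth_mem)
    have A1: "fs!i \<inter> fs!Suc i = F - {v}" if "Suc i < n" "fs!i = F" for i
    proof -
      have "fs!Suc i \<noteq> F" using neq that by auto
      hence "v \<notin> fs!Suc i" using inxs vxs that by blast
      hence s: "fs!i \<inter> fs!Suc i \<subseteq> F - {v}" using that by auto
      have "card (fs!i \<inter> fs!Suc i) = d" using P2 that n_def by auto
      thus ?thesis using s cardR finF using card_subset_eq[of "F - {v}" "fs!i \<inter> fs!Suc i"] by simp
    qed
    have A2: "fs!i \<inter> fs!Suc i = F - {v}" if "Suc i < n" "fs!Suc i = F" for i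
    proof -
      have "fs!i \<noteq> F" using neq that by auto
      hence "v \<notin> fs!i" using inxs vxs that by (meson Suc_lessD)
      hence s: "fs!i \<inter> fs!Suc i \<subseteq> F - {v}" using that by auto
      have "card (fs!i \<inter> fs!Suc i) = d" using P2 that n_def by auto
      thus ?thesis using s cardR finF using card_subset_eq[of "F - {v}" "fs!i \<inter> fs!Suc i"] by simp
    qed
    have B: "fs!i \<noteq> F" if ti: "0 < i" "Suc i < n" for i
    proof
      assume e: "fs!i = F"
      obtain j where j: "i = Suc j" using ti by (cases i) auto
      have "fs!j \<inter> fs!Suc j = fs!i \<inter> fs!Suc i" using A1 A2 e j ti by auto
      thus False using P3[rule_format, of j i] j ti n_def by simp
    qed
    have IHapp: "h \<subseteq> fs!0 \<inter> fs!1" if q: "m' < q" "q \<le> n" "1 \<le> m'" "h \<subseteq> fs!m'"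
      and qs: "\<forall>i<q. fs!i \<noteq> F" for q m'
    proof -
      have T1: "set (take q fs) \<subseteq> set xs"
      proof
        fix x assume "x \<in> set (take q fs)"
        then obtain i where "i < length (take q fs)" "take q fs ! i = x" by (auto simp: in_set_conv_nth)
        thus "x \<in> set xs" using inxs qs q by auto
      qed
      have T2: "\<forall>i. Suc i < length (take q fs) \<longrightarrow> card (take q fs!i \<inter> take q fs!Suc i) = d"
      proof (intro allI impI)
        fix i assume "Suc i < length (take q fs)"
        thus "card (take q fs!i \<inter> take q fs!Suc i) = d" using P2[rule_format, of i] q n_def by simp
      qed
      have T3: "\<forall>i j. i < j \<longrightarrow> Suc j < length (take q fs) \<longrightarrow> take q fs!i \<inter> take q fs!Suc i \<noteq> take q fs!j \<inter> take q fs!Suc j"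
      proof (intro allI impI)
        fix i j assume "i < j" "Suc j < length (take q fs)"
        thus "take q fs!i \<inter> take q fs!Suc i \<noteq> take q fs!j \<inter> take q fs!Suc j"
          using P3[rule_format, of i j] q n_def by simp
      qed
      have "h \<subseteq> take q fs!0 \<inter> take q fs!1"
      proof -
        have "m' < length (take q fs)" using q n_def by simp
        moreover have "h \<subseteq> take q fs!0" "h \<subseteq> take q fs!m'" using q snoc.prems(8) by auto
        ultimately show ?thesis by (rule snoc.IH[OF stk' cards' T1 T2 T3 q(3)])
      qed
      thus ?thesis using q by auto
    qed
    show ?thesis
    proof (cases "fs!0 = F")
      case True
      have r0: "fs!0 \<inter> fs!1 = F - {v}" using A1[of 0] True mn by auto
      have "fs!m \<noteq> F"
      proof
        assume e: "fs!m = F"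
        have mlast: "Suc m = n" using B[of m] e mn by (cases "Suc m < n") auto
        obtain j where j: "m = Suc j" using mn by (cases m) auto
        have "fs!j \<inter> fs!Suc j = F - {v}" using A2[of j] e j mlast by auto
        hence rj: "fs!j \<inter> fs!Suc j = fs!0 \<inter> fs!Suc 0" using r0 by simp
        have "j = 0"
        proof (rule ccontr)
          assume "j \<noteq> 0"
          hence "0 < j" "Suc j < length fs" using j mlast n_def by auto
          thus False using P3[rule_format, of 0 j] rj by simp
        qed
        thus False using neq[of 0] True e j mlast by auto
      qed
      hence "v \<notin> fs!m" using inxs vxs mn by blast
      thus ?thesis using snoc.prems(8,9) r0 True by auto
    next
      case f0: False
      show ?thesis
      proof (cases "fs!m = F")
        case True
        have mlast: "Suc m = n" using B[of m] True mn by (cases "Suc m < n") auto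
        obtain j where j: "m = Suc j" using mn by (cases m) auto
        have "v \<notin> fs!0" using inxs vxs f0 mn by auto
        hence hR: "h \<subseteq> F - {v}" using snoc.prems(8,9) True by auto
        have rj: "fs!j \<inter> fs!Suc j = F - {v}" using A2[of j] True j mlast by auto
        show ?thesis
        proof (cases "j = 0")
          case True thus ?thesis using rj hR by simp
        next
          case False
          have "\<forall>i<m. fs!i \<noteq> F" proof (intro allI impI)
            fix i assume "i < m" thus "fs!i \<noteq> F" using B[of i] f0 mlast by (cases "i = 0") auto
          qed
          thus ?thesis using IHapp[of j m] False j mn hR rj by auto
        qed
      next
        case False
        have "\<forall>i<Suc m. fs!i \<noteq> F" proof (intro allI impI)
          fix i assume "i < Suc m" thus "fs!i \<noteq> F" using B[of i] f0 False mn by (cases "i = 0"; cases "i = m") auto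
        qed
        thus ?thesis using IHapp[of m "Suc m"] mn snoc.prems(9) by auto
      qed
    qed
  qed
qed


lemma key_rev:
  fixes Fs :: "'a set list"
  assumes stk: "\<forall>p. 1 \<le> p \<and> p < length Fs \<longrightarrow> (\<exists>v. Fs!p - \<Union>(set (take p Fs)) = {v})"
    and cards: "\<forall>F\<in>set Fs. card F = Suc d"
    and sub: "set fs \<subseteq> set Fs"
    and P2: "\<forall>i. Suc i < length fs \<longrightarrow> card (fs!i \<inter> fs!Suc i) = d"
    and P3: "\<forall>i j. i < j \<longrightarrow> Suc j < length fs \<longrightarrow> fs!i \<inter> fs!Suc i \<noteq> fs!j \<inter> fs!Suc j"
    and m: "m + 1 < length fs" and h1: "h \<subseteq> fs!(length fs - 1)" and h2: "h \<subseteq> fs!m"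
  shows "h \<subseteq> fs!(length fs - 1) \<inter> fs!(length fs - 2)"
proof -
  define n where "n = length fs"
  define gs where "gs = rev fs"
  have gn: "gs ! i = fs ! (n - Suc i)" if "i < n" for i using that unfolding gs_def n_def by (simp add: rev_nth)
  have lg: "length gs = n" unfolding gs_def n_def by simp
  have S: "set gs \<subseteq> set Fs" using sub unfolding gs_def by simp
  have Q2: "\<forall>i. Suc i < length gs \<longrightarrow> card (gs!i \<inter> gs!Suc i) = d"
  proof (intro allI impI)
    fix i assume a: "Suc i < length gs"
    have "card (fs!(n - Suc (Suc i)) \<inter> fs!Suc (n - Suc (Suc i))) = d"
      using P2[rule_format, of "n - Suc (Suc i)"] a lg n_def by simp
    moreover have "Suc (n - Suc (Suc i)) = n - Suc i" using a lg by simp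
    ultimately show "card (gs!i \<inter> gs!Suc i) = d" using gn a lg by (simp add: Int_commute)
  qed
  have Q3: "\<forall>i j. i < j \<longrightarrow> Suc j < length gs \<longrightarrow> gs!i \<inter> gs!Suc i \<noteq> gs!j \<inter> gs!Suc j"
  proof (intro allI impI)
    fix i j assume a: "i < j" "Suc j < length gs"
    have ne: "fs!(n - Suc (Suc j)) \<inter> fs!Suc (n - Suc (Suc j)) \<noteq> fs!(n - Suc (Suc i)) \<inter> fs!Suc (n - Suc (Suc i))"
      using P3[rule_format, of "n - Suc (Suc j)" "n - Suc (Suc i)"] a lg n_def by simp
    have e1: "Suc (n - Suc (Suc i)) = n - Suc i" "Suc (n - Suc (Suc j)) = n - Suc j" using a lg by auto
    show "gs!i \<inter> gs!Suc i \<noteq> gs!j \<inter> gs!Suc j" using ne e1 gn a lg by (simp add: Int_commute)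
  qed
  have n0: "0 < n" "1 < n" "n - Suc m < n" using m n_def by auto
  have g0: "gs!0 = fs!(n-1)" using gn[OF n0(1)] by simp
  have g1: "gs!1 = fs!(n-2)" using gn[OF n0(2)] by (simp add: numeral_2_eq_2)
  have gm: "gs!(n - Suc m) = fs!m" using gn[OF n0(3)] m n_def by simp
  have "1 \<le> n - Suc m" "n - Suc m < length gs" using m lg n_def by auto
  moreover have "h \<subseteq> gs!0" "h \<subseteq> gs!(n - Suc m)" using h1 h2 g0 gm n_def by auto
  ultimately have "h \<subseteq> gs!0 \<inter> gs!1"
    using key[OF stk cards S Q2 Q3, of "n - Suc m" h] by blast
  moreover note g0 g1
  ultimately show ?thesis unfolding n_def by simp
qed

theorem lemma2p8:
  fixes V :: "'a set" and X :: "'a set set" and d :: nat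
    and h k :: "'a set" and fs :: "'a set list"
  assumes "simplicial_complex V X"
    and "stacked_dim X d"
    and "h \<in> X" and "k \<in> X"
    and "\<not> (\<exists>c. codim_one X d c \<and> h \<union> k \<subseteq> c)"
    and "path_between X d h fs k"
  shows "\<forall>i. i + 1 < length fs \<longrightarrow>
           \<not> h \<subseteq> fs ! i \<inter> fs ! (i + 1) \<and> \<not> k \<subseteq> fs ! i \<inter> fs ! (i + 1)"
proof -
  obtain Fs where so: "stacking_order X Fs" using assms(2) unfolding stacked_dim_def by blast
  have stk: "\<forall>p. 1 \<le> p \<and> p < length Fs \<longrightarrow> (\<exists>v. Fs!p - \<Union>(set (take p Fs)) = {v})"
    using so unfolding stacking_order_def by blast
  have cards: "\<forall>F\<in>set Fs. card F = Suc d"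
    using so assms(2) unfolding stacking_order_def stacked_dim_def pure_dim_def by simp
  have pb: "path X d fs" "h \<subseteq> hd fs" "k \<subseteq> last fs"
    "2 \<le> length fs \<longrightarrow> \<not> h \<subseteq> fs ! 0 \<inter> fs ! 1 \<and> \<not> k \<subseteq> fs ! (length fs - 1) \<inter> fs ! (length fs - 2)"
    using assms(6) unfolding path_between_def by auto
  have ne: "fs \<noteq> []" and sub: "set fs \<subseteq> set Fs"
    using pb(1) so unfolding path_def walk_def stacking_order_def by auto
  have P2: "\<forall>i. Suc i < length fs \<longrightarrow> card (fs!i \<inter> fs!Suc i) = d"
    using pb(1) unfolding path_def walk_def by simp
  have D: "distinct (map (\<lambda>i. fs ! i \<inter> fs ! (i + 1)) [0..<length fs - 1])"
    using pb(1) unfolding path_def by simp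
  have P3: "\<forall>i j. i < j \<longrightarrow> Suc j < length fs \<longrightarrow> fs!i \<inter> fs!Suc i \<noteq> fs!j \<inter> fs!Suc j"
  proof (intro allI impI)
    fix i j assume a: "i < j" "Suc j < length fs"
    have "map (\<lambda>i. fs ! i \<inter> fs ! (i + 1)) [0..<length fs - 1] ! i \<noteq> map (\<lambda>i. fs ! i \<inter> fs ! (i + 1)) [0..<length fs - 1] ! j"
      using D a by (simp only: nth_eq_iff_index_eq length_map length_upt)
    moreover have "[0..<length fs - 1] ! i = i" "[0..<length fs - 1] ! j = j" using a by auto
    ultimately show "fs!i \<inter> fs!Suc i \<noteq> fs!j \<inter> fs!Suc j" using a by simp
  qed
  have h0: "h \<subseteq> fs!0" using pb(2) ne by (simp add: hd_conv_nth)
  have kl: "k \<subseteq> fs!(length fs - 1)" using pb(3) ne by (simp add: last_conv_nth)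
  show ?thesis
  proof (intro allI impI conjI)
    fix i assume a: "i + 1 < length fs"
    show "\<not> h \<subseteq> fs ! i \<inter> fs ! (i + 1)"
    proof
      assume hi: "h \<subseteq> fs ! i \<inter> fs ! (i + 1)"
      show False
      proof (cases "i = 0")
        case True thus False using pb(4) a hi by simp
      next
        case False
        have "h \<subseteq> fs!0 \<inter> fs!1" using key[OF stk cards sub P2 P3, of i] False a hi h0 by simp
        thus False using pb(4) a by simp
      qed
    qed
    show "\<not> k \<subseteq> fs ! i \<inter> fs ! (i + 1)"
    proof
      assume ki: "k \<subseteq> fs ! i \<inter> fs ! (i + 1)"
      show False
      proof (cases "i + 2 = length fs")
        case True
        hence "length fs - 2 = i" "length fs - 1 = i + 1" by auto
        hence "fs!i = fs!(length fs - 2)" "fs!(i+1) = fs!(length fs - 1)" by simp_all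
        thus False using pb(4) a ki by auto
      next
        case False
        have "k \<subseteq> fs!(length fs - 1) \<inter> fs!(length fs - 2)"
          using key_rev[OF stk cards sub P2 P3, of i] False a ki kl by simp
        thus False using pb(4) a by simp
      qed
    qed
  qed
qed

end
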